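(* For all complex $q$ with $|q|<1$, $$\psi(q)\psi(q^7)=\psi(q^8)\varphi(q^{28})+q^6\varphi(q^4)\psi(q^{56})+q\psi(q^{16})\varphi(q^{56})+q^3\psi(q^4)\psi(q^{28})+q^{13}\varphi(q^8)\psi(q^{112}).$$
   Context: Ramanujan's theta functions are $\varphi(q)=\sum_{n=-\infty}^{\infty}q^{n^2}$ and $\psi(q)=\sum_{n=0}^{\infty}q^{n(n+1)/2}$ for $|q|<1$. *)

theory Defs
  imports "HOL-Analysis.Analysis"
begin

definition ram_phi :: "complex \<Rightarrow> complex" where
  "ram_phi q = (\<Sum>\<^sub>\<infinity>n::int. q ^ nat (n\<^sup>2))"

definition ram_psi :: "complex \<Rightarrow> complex" where
  "ram_psi q = (\<Sum>n::nat. q ^ (n * (n + 1) div 2))"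

end

theory Submission
  imports Defs
begin

lemma tri_nonneg: "0 \<le> 2*(a::int)^2 + a"
proof (cases "a \<ge> 0")
  case True then show ?thesis by (simp add: power2_eq_square)
next
  case False
  then have "2*a^2 + a = a*(2*a+1)" by (simp add: power2_eq_square algebra_simps)
  also have "\<dots> \<ge> 0" using False by (intro mult_nonpos_nonpos) auto
  finally show ?thesis .
qed

lemma psi_nat:
  fixes q :: complex
  assumes "norm q < 1"
  shows "summable (\<lambda>n. norm (q ^ (n * (n + 1) div 2)))"
proof (rule summable_comparison_test')
  show "summable (\<lambda>n. norm q ^ n)" using assms by (simp add: summable_geometric)
  fix n :: nat assume "n \<ge> 0"
  have "n \<le> n * (n + 1) div 2"
  proof (cases n)
    case (Suc m) then show ?thesis by simp
  qed simp
  then have "norm q ^ (n * (n + 1) div 2) \<le> norm q ^ n"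
    using assms by (intro power_decreasing) auto
  then show "norm (norm (q ^ (n * (n + 1) div 2))) \<le> norm q ^ n" by (simp add: norm_power)
qed

lemma tri_idx: "int ((if n \<ge> 0 then nat (2*n) else nat (-2*n-1)) * ((if n \<ge> 0 then nat (2*n) else nat (-2*n-1)) + 1) div 2) = 2*n^2+n"
proof -
  define m where "m = (if n \<ge> 0 then nat (2*n) else nat (-2*n-1))"
  have im: "int m = (if n \<ge> 0 then 2*n else -2*n-1)" by (simp add: m_def)
  have "int m * (int m + 1) = 2*(2*n^2+n)" unfolding im by (simp add: power2_eq_square algebra_simps)
  moreover have "int (m * (m + 1) div 2) = (int m * (int m + 1)) div 2" by (simp add: zdiv_int algebra_simps)
  ultimately show ?thesis unfolding m_def[symmetric] by simp
qed

definition J :: "int \<Rightarrow> nat" where "J n = (if n \<ge> 0 then nat (2*n) else nat (-2*n-1))"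

lemma J_inv1: "(if even (J a) then int (J a) div 2 else -(int (J a)+1) div 2) = a"
proof (cases "a \<ge> 0")
  case True
  then have "J a = nat (2*a)" by (simp add: J_def)
  moreover have "even (nat (2*a))" using True by (simp add: even_nat_iff)
  ultimately show ?thesis using True by simp
next
  case False
  then have "J a = nat (-2*a-1)" by (simp add: J_def)
  moreover have "odd (nat (-2*a-1))" using False by (simp add: even_nat_iff)
  ultimately show ?thesis using False by simp
qed

lemma J_inv2: "J (if even m then int m div 2 else -(int m+1) div 2) = m"
proof (cases "even m")
  case True
  then obtain k where "m = 2*k" by (auto elim: evenE)
  then show ?thesis by (simp add: J_def)
next
  case False
  then obtain k where "m = 2*k+1" by (auto elim: oddE)
  then show ?thesis by (simp add: J_def)
qed

lemma reindex_J:
  assumes "(g has_sum s) (UNIV::nat set)"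
  shows "((\<lambda>n::int. g (J n)) has_sum s) UNIV"
proof -
  have "((\<lambda>n::int. g (J n)) has_sum s) UNIV = (g has_sum s) UNIV"
    by (rule has_sum_reindex_bij_witness[where j = J and i = "\<lambda>m. if even m then int m div 2 else -(int m+1) div 2"])
       (auto simp: J_inv1 J_inv2)
  then show ?thesis using assms by simp
qed

lemma tri_idx2: "J n * (J n + 1) div 2 = nat (2*n^2+n)"
  using tri_idx[of n] unfolding J_def[symmetric] by linarith

lemma psi_has_sum:
  fixes q :: complex
  assumes "norm q < 1"
  shows "((\<lambda>n::int. q ^ nat (2*n^2+n)) has_sum ram_psi q) UNIV"
    and "(\<lambda>n::int. norm (q ^ nat (2*n^2+n))) summable_on UNIV"
proof -
  let ?f = "\<lambda>n::nat. q^(n*(n+1) div 2)"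
  have s: "summable (\<lambda>n. norm (?f n))" by (rule psi_nat[OF assms])
  have "?f sums ram_psi q" unfolding ram_psi_def using summable_norm_cancel[OF s] by (simp add: summable_sums)
  hence "(?f has_sum ram_psi q) UNIV" by (rule norm_summable_imp_has_sum[OF s])
  from reindex_J[OF this] show "((\<lambda>n::int. q ^ nat (2*n^2+n)) has_sum ram_psi q) UNIV"
    unfolding tri_idx2 .
  have "(\<lambda>n. norm (?f n)) summable_on UNIV" using s by (intro norm_summable_imp_summable_on) simp
  then obtain S where "((\<lambda>n. norm (?f n)) has_sum S) UNIV" by (auto simp: summable_on_def)
  from reindex_J[OF this] show "(\<lambda>n::int. norm (q ^ nat (2*n^2+n))) summable_on UNIV"
    unfolding tri_idx2 by (auto simp: summable_on_def)
qed

lemma phi_has_sum: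
  fixes q :: complex
  assumes "norm q < 1"
  shows "((\<lambda>n::int. q ^ nat (n^2)) has_sum ram_phi q) UNIV"
    and "(\<lambda>n::int. norm (q ^ nat (n^2))) summable_on UNIV"
proof -
  define s where "s = root 3 (norm q)"
  have s0: "0 \<le> s" by (simp add: s_def)
  have s1: "s < 1" unfolding s_def using assms by (simp add: real_root_lt_1_iff)
  have s3: "s ^ 3 = norm q" unfolding s_def by (simp add: real_root_pow_pos2)
  have "norm (complex_of_real s) < 1" using s0 s1 by simp
  from psi_has_sum(2)[OF this]
  have g: "(\<lambda>n::int. norm (complex_of_real s ^ nat (2*n^2+n))) summable_on UNIV" .
  show "(\<lambda>n::int. norm (q ^ nat (n^2))) summable_on UNIV"
  proof (rule Infinite_Sum.abs_summable_on_comparison_test[OF g])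
    fix n :: int
    have le: "nat (2*n^2+n) \<le> 3 * nat (n^2)"
    proof -
      have "n \<le> n^2" using zero_le_square[of n] mult_left_mono[of 1 n n] by (cases "n \<le> 0") (auto simp: power2_eq_square intro: order_trans[of n 0])
      then show ?thesis by (simp add: nat_mult_distrib[symmetric] flip: nat_numeral)
    qed
    have "norm (q ^ nat (n^2)) = s ^ (3 * nat (n^2))" by (simp add: norm_power power_mult s3)
    also have "\<dots> \<le> s ^ nat (2*n^2+n)" using s0 s1 le by (intro power_decreasing) auto
    finally show "norm (q ^ nat (n^2)) \<le> norm (complex_of_real s ^ nat (2*n^2+n))"
      using s0 by (simp add: norm_power)
  qed
  then have "(\<lambda>n::int. q ^ nat (n^2)) summable_on UNIV" by (rule Infinite_Sum.abs_summable_summable)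
  then show "((\<lambda>n::int. q ^ nat (n^2)) has_sum ram_phi q) UNIV"
    unfolding ram_phi_def by (simp add: summable_iff_has_sum_infsum)
qed

lemma prod_has_sum:
  fixes f g :: "int \<Rightarrow> complex"
  assumes "(f has_sum F) UNIV" "(g has_sum G) UNIV"
    and "(\<lambda>a. norm (f a)) summable_on UNIV" "(\<lambda>b. norm (g b)) summable_on UNIV"
  shows "((\<lambda>(a,b). f a * g b) has_sum (F*G)) UNIV"
proof -
  have P: "((\<lambda>(a,b). f a * g b) has_sum (F*G)) (Sigma UNIV (\<lambda>_. UNIV))"
  proof (rule has_sum_SigmaI[where g = "\<lambda>a. f a * G"])
    show "((\<lambda>b. (\<lambda>(a,b). f a * g b) (a,b)) has_sum f a * G) UNIV" for a
      using has_sum_cmult_right[OF assms(2), of "f a"] by simp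
    show "((\<lambda>a. f a * G) has_sum F*G) UNIV"
      using has_sum_cmult_left[OF assms(1), of G] by simp
    have "(\<lambda>x. norm ((\<lambda>(a,b). f a * g b) x)) summable_on Sigma UNIV (\<lambda>_. UNIV)"
    proof (rule Infinite_Sum.abs_summable_on_Sigma_iff[THEN iffD2], intro conjI ballI)
      show "(\<lambda>b. norm ((\<lambda>(a,b). f a * g b) (a, b))) summable_on UNIV" for a
        using summable_on_cmult_right[OF assms(4), of "norm (f a)"] by (simp add: norm_mult)
      have "(\<lambda>a. norm (f a) * infsum (\<lambda>b. norm (g b)) UNIV) summable_on UNIV"
        using summable_on_cmult_left[OF assms(3)] by simp
      moreover have "norm (infsum (\<lambda>y. norm ((\<lambda>(a,b). f a * g b) (x, y))) UNIV) = norm (f x) * infsum (\<lambda>b. norm (g b)) UNIV" for x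
        by (simp add: norm_mult infsum_cmult_right' infsum_nonneg)
      ultimately show "(\<lambda>x. norm (infsum (\<lambda>y. norm ((\<lambda>(a,b). f a * g b) (x, y))) UNIV)) summable_on UNIV"
        by simp
    qed
    then show "(\<lambda>(a,b). f a * g b) summable_on Sigma UNIV (\<lambda>_. UNIV)"
      by (rule Infinite_Sum.abs_summable_summable)
  qed
  then show ?thesis by simp
qed

definition w :: "complex \<Rightarrow> int \<times> int \<Rightarrow> complex" where
  "w q p = q ^ nat ((fst p ^ 2 + 7 * snd p ^ 2 - 4) div 4)"

lemma wE: "(x::int)^2 + 7*y^2 - 4 = 4*E \<Longrightarrow> w q (x,y) = q ^ nat E"
  by (simp add: w_def)

lemma pw:
  fixes q :: complex
  assumes "0 \<le> A" "0 \<le> B" "0 \<le> c"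
  shows "q ^ nat (c + int k * A + int m * B) = q ^ nat c * ((q^k)^nat A * (q^m)^nat B)"
proof -
  have "nat (c + int k*A + int m*B) = nat c + k * nat A + m * nat B"
    using assms by (simp add: nat_add_distrib nat_mult_distrib)
  then show ?thesis by (simp add: power_add power_mult)
qed

lemma npow: "norm (q::complex) < 1 \<Longrightarrow> k > 0 \<Longrightarrow> norm (q^k) < 1"
  by (simp add: norm_power power_less_one_iff)

lemma reidx:
  assumes "(g has_sum s) UNIV" "\<And>p. i (j p) = p" "\<And>p. j p \<in> T" "\<And>b. b \<in> T \<Longrightarrow> j (i b) = b"
    "\<And>p. h (j p) = g p"
  shows "(h has_sum s) T"
  using has_sum_reindex_bij_witness[of UNIV i j T h g s s] assms by auto

definition j1 :: "int \<times> int \<Rightarrow> int \<times> int" where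
  "j1 = (\<lambda>(a,c). (if even c then 8*a+2 else -8*a-2, 4*c))"
definition i1 :: "int \<times> int \<Rightarrow> int \<times> int" where
  "i1 = (\<lambda>(x,y). (if even (y div 4) then (x-2) div 8 else (-x-2) div 8, y div 4))"
definition S1 :: "(int \<times> int) set" where "S1 = {(x,y). (x - y) mod 8 = 2 \<and> y mod 4 = 0}"

lemma T1:
  fixes q :: complex
  assumes "norm q < 1"
  shows "(w q has_sum (ram_psi (q^8) * ram_phi (q^28))) S1"
proof (rule reidx[where i=i1 and j=j1])
  show "((\<lambda>(a,c). (q^8) ^ nat (2*a^2+a) * (q^28) ^ nat (c^2)) has_sum (ram_psi (q^8) * ram_phi (q^28))) UNIV"
    using assms npow[OF assms]
    by (intro prod_has_sum psi_has_sum phi_has_sum) auto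
  show "i1 (j1 p) = p" for p
    by (cases p) (auto simp: i1_def j1_def)
  show "j1 p \<in> S1" for p
    by (cases p) (auto simp: S1_def j1_def; presburger)
  show "j1 (i1 b) = b" if "b \<in> S1" for b
    using that by (cases b) (auto simp: S1_def j1_def i1_def; presburger)
  show "w q (j1 p) = (\<lambda>(a,c). (q^8) ^ nat (2*a^2+a) * (q^28) ^ nat (c^2)) p" for p
  proof (cases p)
    case (Pair a c)
    have "w q (j1 p) = q ^ nat (8 * (2*a^2+a) + 28 * c^2)"
      unfolding Pair j1_def by (cases "even c") (auto intro!: wE simp: power2_eq_square algebra_simps)
    also have "\<dots> = (q^8) ^ nat (2*a^2+a) * (q^28) ^ nat (c^2)"
      using pw[of "2*a^2+a" "c^2" 0 q 8 28] tri_nonneg[of a] by simp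
    finally show ?thesis unfolding Pair by simp
  qed
qed

definition j2 :: "int \<times> int \<Rightarrow> int \<times> int" where
  "j2 = (\<lambda>(c,b). (4*c, if even c then -8*b-2 else 8*b+2))"
definition i2 :: "int \<times> int \<Rightarrow> int \<times> int" where
  "i2 = (\<lambda>(x,y). (x div 4, if even (x div 4) then (-y-2) div 8 else (y-2) div 8))"
definition S2 :: "(int \<times> int) set" where "S2 = {(x,y). (x - y) mod 8 = 2 \<and> y mod 4 = 2}"

lemma T2:
  fixes q :: complex
  assumes "norm q < 1"
  shows "(w q has_sum (q^6 * (ram_phi (q^4) * ram_psi (q^56)))) S2"
proof (rule reidx[where i=i2 and j=j2])
  have P: "((\<lambda>(a,b). (q^4) ^ nat (a^2) * (q^56) ^ nat (2*b^2+b)) has_sum (ram_phi (q^4) * ram_psi (q^56))) UNIV"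
    using assms npow[OF assms]
    by (intro prod_has_sum psi_has_sum phi_has_sum) auto
  from P show "((\<lambda>(a,b). q^6 * ((q^4) ^ nat (a^2) * (q^56) ^ nat (2*b^2+b))) has_sum (q^6 * (ram_phi (q^4) * ram_psi (q^56)))) UNIV"
    using has_sum_cmult_right[OF P, of "q^6"] by (simp add: case_prod_unfold)
  show "i2 (j2 p) = p" for p
    by (cases p) (auto simp: i2_def j2_def; presburger)
  show "j2 p \<in> S2" for p
    by (cases p) (auto simp: S2_def j2_def; presburger)
  show "j2 (i2 b) = b" if "b \<in> S2" for b
    using that by (cases b) (auto simp: S2_def j2_def i2_def; presburger)
  show "w q (j2 p) = (\<lambda>(a,b). q^6 * ((q^4) ^ nat (a^2) * (q^56) ^ nat (2*b^2+b))) p" for p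
  proof (cases p)
    case (Pair a b)
    have "w q (j2 p) = q ^ nat (6 + 4 * (a^2) + 56 * (2*b^2+b))"
      unfolding Pair j2_def by (cases "even a") (auto intro!: wE simp: power2_eq_square algebra_simps)
    also have "\<dots> = q^6 * ((q^4) ^ nat (a^2) * (q^56) ^ nat (2*b^2+b))"
      using pw[of "a^2" "2*b^2+b" "6" q 4 56] tri_nonneg[of a] tri_nonneg[of b] by simp
    finally show ?thesis unfolding Pair by simp
  qed
qed

definition j3 :: "int \<times> int \<Rightarrow> int \<times> int" where
  "j3 = (\<lambda>(a,c). (if even c then 4*a+1+14*c else -4*a-1+14*c, if even c then 2*c-4*a-1 else 2*c+4*a+1))"
definition i3 :: "int \<times> int \<Rightarrow> int \<times> int" where
  "i3 = (\<lambda>(x,y). (if even ((x+y) div 16) then (x - 14*((x+y) div 16) - 1) div 4 else (-(x - 14*((x+y) div 16)) - 1) div 4, (x+y) div 16))"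
definition S3 :: "(int \<times> int) set" where "S3 = {(x,y). (x - y) mod 8 = 2 \<and> y mod 4 = 3 \<and> (x+y) mod 16 = 0}"

lemma W3a: "i3 (j3 (a,c)) = (a,c)"
proof (cases "even (c)")
  case True then obtain e where e: "c = 2*e" by (auto elim: evenE)
  have *: "c = 2*e" using e by simp
  show ?thesis unfolding * by (auto simp: i3_def j3_def algebra_simps; presburger)
next
  case False then obtain e where e: "c = 2*e+1" by (auto elim: oddE)
  have *: "c = 2*e+1" using e by simp
  show ?thesis unfolding * by (auto simp: i3_def j3_def algebra_simps; presburger)
qed
lemma W3b: "j3 (a,c) \<in> S3"
proof (cases "even (c)")
  case True then obtain e where e: "c = 2*e" by (auto elim: evenE)
  have *: "c = 2*e" using e by simp
  show ?thesis unfolding * by (auto simp: S3_def j3_def algebra_simps; presburger)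
next
  case False then obtain e where e: "c = 2*e+1" by (auto elim: oddE)
  have *: "c = 2*e+1" using e by simp
  show ?thesis unfolding * by (auto simp: S3_def j3_def algebra_simps; presburger)
qed
lemma W3c: assumes "(x,y) \<in> S3" shows "j3 (i3 (x,y)) = (x,y)"
proof -
  from assms have h: "(x-y) mod 8 = 2" "y mod 4 = 3" "(x+y) mod 16 = 0" by (auto simp: S3_def)
  obtain k where y: "y = 4*k+3" using h(2) by (metis add.commute div_mod_decomp_int mult.commute)
  obtain c where c: "x = 16*c - 4*k - 3" using h(3) y by (metis dvd_def mod_0_imp_dvd add_diff_cancel_right' diff_diff_eq)
  show ?thesis
  proof (cases "even c")
    case True
    then obtain e where "c = 2*e" by (auto elim: evenE)
    then show ?thesis unfolding y c by (simp add: i3_def j3_def algebra_simps)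
  next
    case False
    then obtain e where "c = 2*e+1" by (auto elim: oddE)
    then show ?thesis unfolding y c by (simp add: i3_def j3_def algebra_simps)
  qed
qed


lemma T3:
  fixes q :: complex
  assumes "norm q < 1"
  shows "(w q has_sum (q * (ram_psi (q^16) * ram_phi (q^56)))) S3"
proof (rule reidx[where i=i3 and j=j3])
  have P: "((\<lambda>(a,b). (q^16) ^ nat (2*a^2+a) * (q^56) ^ nat (b^2)) has_sum (ram_psi (q^16) * ram_phi (q^56))) UNIV"
    using assms npow[OF assms]
    by (intro prod_has_sum psi_has_sum phi_has_sum) auto
  from P show "((\<lambda>(a,b). q * ((q^16) ^ nat (2*a^2+a) * (q^56) ^ nat (b^2))) has_sum (q * (ram_psi (q^16) * ram_phi (q^56)))) UNIV"
    using has_sum_cmult_right[OF P, of "q"] by (simp add: case_prod_unfold)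
  show "i3 (j3 p) = p" for p
    by (cases p) (simp add: W3a)
  show "j3 p \<in> S3" for p
    by (cases p) (simp add: W3b)
  show "j3 (i3 b) = b" if "b \<in> S3" for b
    using that W3c by (cases b) auto
  show "w q (j3 p) = (\<lambda>(a,b). q * ((q^16) ^ nat (2*a^2+a) * (q^56) ^ nat (b^2))) p" for p
  proof (cases p)
    case (Pair a b)
    have "w q (j3 p) = q ^ nat (1 + 16 * (2*a^2+a) + 56 * (b^2))"
      unfolding Pair j3_def by (cases "even b") (auto intro!: wE simp: power2_eq_square algebra_simps)
    also have "\<dots> = q * ((q^16) ^ nat (2*a^2+a) * (q^56) ^ nat (b^2))"
      using pw[of "2*a^2+a" "b^2" "1" q 16 56] tri_nonneg[of a] tri_nonneg[of b] by simp
    finally show ?thesis unfolding Pair by simp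
  qed
qed

definition j4 :: "int \<times> int \<Rightarrow> int \<times> int" where
  "j4 = (\<lambda>(a,b). if even (a+b) then (-2*a+14*b+3, 2*a+2*b+1) else (2*a-14*b-3, -2*a-2*b-1))"
definition i4 :: "int \<times> int \<Rightarrow> int \<times> int" where
  "i4 = (\<lambda>(x,y). if (x+y) mod 16 = 4 then ((y-1) div 2 - (x+y-4) div 16, (x+y-4) div 16) else ((-y-1) div 2 - (-(x+y)-4) div 16, (-(x+y)-4) div 16))"
definition S4 :: "(int \<times> int) set" where "S4 = {(x,y). (x - y) mod 8 = 2 \<and> y mod 4 = 1}"

lemma W4a: "i4 (j4 (a,b)) = (a,b)"
proof (cases "even (a+b)")
  case True then obtain e where e: "a+b = 2*e" using evenE[OF True] by blast
  have *: "a = 2*e - b" using e by simp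
  show ?thesis unfolding * by (auto simp: i4_def j4_def algebra_simps; presburger)
next
  case False then obtain e where e: "a+b = 2*e+1" using oddE[OF False] by blast
  have *: "a = 2*e + 1 - b" using e by simp
  show ?thesis unfolding * by (auto simp: i4_def j4_def algebra_simps; presburger)
qed
lemma W4b: "j4 (a,b) \<in> S4"
proof (cases "even (a+b)")
  case True then obtain e where e: "a+b = 2*e" using evenE[OF True] by blast
  have *: "a = 2*e - b" using e by simp
  show ?thesis unfolding * by (auto simp: S4_def j4_def algebra_simps; presburger)
next
  case False then obtain e where e: "a+b = 2*e+1" using oddE[OF False] by blast
  have *: "a = 2*e + 1 - b" using e by simp
  show ?thesis unfolding * by (auto simp: S4_def j4_def algebra_simps; presburger)
qed
lemma W4c: assumes "(x,y) \<in> S4" shows "j4 (i4 (x,y)) = (x,y)"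
proof -
  from assms have h: "(x-y) mod 8 = 2" "y mod 4 = 1" by (auto simp: S4_def)
  obtain k where y: "y = 4*k+1" using h(2) by (metis add.commute div_mod_decomp_int mult.commute)
  have "(x+y) mod 16 = 4 \<or> (x+y) mod 16 = 12" using h by presburger
  then show ?thesis
  proof
    assume m: "(x+y) mod 16 = 4"
    obtain n where x: "x = 16*n + 4 - y" using m by (metis add_diff_cancel_right' div_mod_decomp_int mult.commute)
    show ?thesis unfolding x y by (simp add: i4_def j4_def algebra_simps)
  next
    assume m: "(x+y) mod 16 = 12"
    obtain n where x: "x = 16*n + 12 - y" using m by (metis add_diff_cancel_right' div_mod_decomp_int mult.commute)
    show ?thesis unfolding x y by (simp add: i4_def j4_def algebra_simps)
  qed
qed


lemma T4:
  fixes q :: complex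
  assumes "norm q < 1"
  shows "(w q has_sum (q^3 * (ram_psi (q^4) * ram_psi (q^28)))) S4"
proof (rule reidx[where i=i4 and j=j4])
  have P: "((\<lambda>(a,b). (q^4) ^ nat (2*a^2+a) * (q^28) ^ nat (2*b^2+b)) has_sum (ram_psi (q^4) * ram_psi (q^28))) UNIV"
    using assms npow[OF assms]
    by (intro prod_has_sum psi_has_sum phi_has_sum) auto
  from P show "((\<lambda>(a,b). q^3 * ((q^4) ^ nat (2*a^2+a) * (q^28) ^ nat (2*b^2+b))) has_sum (q^3 * (ram_psi (q^4) * ram_psi (q^28)))) UNIV"
    using has_sum_cmult_right[OF P, of "q^3"] by (simp add: case_prod_unfold)
  show "i4 (j4 p) = p" for p
    by (cases p) (simp add: W4a)
  show "j4 p \<in> S4" for p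
    by (cases p) (simp add: W4b)
  show "j4 (i4 b) = b" if "b \<in> S4" for b
    using that W4c by (cases b) auto
  show "w q (j4 p) = (\<lambda>(a,b). q^3 * ((q^4) ^ nat (2*a^2+a) * (q^28) ^ nat (2*b^2+b))) p" for p
  proof (cases p)
    case (Pair a b)
    have "w q (j4 p) = q ^ nat (3 + 4 * (2*a^2+a) + 28 * (2*b^2+b))"
      unfolding Pair j4_def by (cases "even (a+b)") (auto intro!: wE simp: power2_eq_square algebra_simps)
    also have "\<dots> = q^3 * ((q^4) ^ nat (2*a^2+a) * (q^28) ^ nat (2*b^2+b))"
      using pw[of "2*a^2+a" "2*b^2+b" "3" q 4 28] tri_nonneg[of a] tri_nonneg[of b] by simp
    finally show ?thesis unfolding Pair by simp
  qed
qed

definition j5 :: "int \<times> int \<Rightarrow> int \<times> int" where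
  "j5 = (\<lambda>(c,b). (if odd c then 2*c+28*b+7 else 2*c-28*b-7, if odd c then 4*b+1-2*c else -4*b-1-2*c))"
definition i5 :: "int \<times> int \<Rightarrow> int \<times> int" where
  "i5 = (\<lambda>(x,y). ((x - 7*((x+y) div 8)) div 2, if odd ((x - 7*((x+y) div 8)) div 2) then ((x+y) div 8 - 1) div 4 else (-((x+y) div 8) - 1) div 4))"
definition S5 :: "(int \<times> int) set" where "S5 = {(x,y). (x - y) mod 8 = 2 \<and> y mod 4 = 3 \<and> (x+y) mod 16 = 8}"

lemma W5a: "i5 (j5 (c,b)) = (c,b)"
proof (cases "even (c)")
  case True then obtain e where e: "c = 2*e" by (auto elim: evenE)
  have *: "c = 2*e" using e by simp
  show ?thesis unfolding * by (auto simp: i5_def j5_def algebra_simps; presburger)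
next
  case False then obtain e where e: "c = 2*e+1" by (auto elim: oddE)
  have *: "c = 2*e+1" using e by simp
  show ?thesis unfolding * by (auto simp: i5_def j5_def algebra_simps; presburger)
qed
lemma W5b: "j5 (c,b) \<in> S5"
proof (cases "even (c)")
  case True then obtain e where e: "c = 2*e" by (auto elim: evenE)
  have *: "c = 2*e" using e by simp
  show ?thesis unfolding * by (auto simp: S5_def j5_def algebra_simps; presburger)
next
  case False then obtain e where e: "c = 2*e+1" by (auto elim: oddE)
  have *: "c = 2*e+1" using e by simp
  show ?thesis unfolding * by (auto simp: S5_def j5_def algebra_simps; presburger)
qed
lemma W5c: assumes "(x,y) \<in> S5" shows "j5 (i5 (x,y)) = (x,y)"
proof -
  from assms have h: "(x-y) mod 8 = 2" "y mod 4 = 3" "(x+y) mod 16 = 8" by (auto simp: S5_def)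
  obtain k where y: "y = 4*k+3" using h(2) by (metis add.commute div_mod_decomp_int mult.commute)
  obtain m where x: "x = 16*m + 8 - y" using h(3) by (metis add_diff_cancel_right' div_mod_decomp_int mult.commute)
  show ?thesis
  proof (cases "even m")
    case True
    then obtain e where "m = 2*e" by (auto elim: evenE)
    then show ?thesis unfolding x y by (simp add: i5_def j5_def algebra_simps)
  next
    case False
    then obtain e where "m = 2*e+1" by (auto elim: oddE)
    then show ?thesis unfolding x y by (simp add: i5_def j5_def algebra_simps)
  qed
qed

lemma T5:
  fixes q :: complex
  assumes "norm q < 1"
  shows "(w q has_sum (q^13 * (ram_phi (q^8) * ram_psi (q^112)))) S5"
proof (rule reidx[where i=i5 and j=j5])
  have P: "((\<lambda>(a,b). (q^8) ^ nat (a^2) * (q^112) ^ nat (2*b^2+b)) has_sum (ram_phi (q^8) * ram_psi (q^112))) UNIV"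
    using assms npow[OF assms]
    by (intro prod_has_sum psi_has_sum phi_has_sum) auto
  from P show "((\<lambda>(a,b). q^13 * ((q^8) ^ nat (a^2) * (q^112) ^ nat (2*b^2+b))) has_sum (q^13 * (ram_phi (q^8) * ram_psi (q^112)))) UNIV"
    using has_sum_cmult_right[OF P, of "q^13"] by (simp add: case_prod_unfold)
  show "i5 (j5 p) = p" for p
    by (cases p) (simp add: W5a)
  show "j5 p \<in> S5" for p
    by (cases p) (simp add: W5b)
  show "j5 (i5 b) = b" if "b \<in> S5" for b
    using that W5c by (cases b) auto
  show "w q (j5 p) = (\<lambda>(a,b). q^13 * ((q^8) ^ nat (a^2) * (q^112) ^ nat (2*b^2+b))) p" for p
  proof (cases p)
    case (Pair a b)
    have "w q (j5 p) = q ^ nat (13 + 8 * (a^2) + 112 * (2*b^2+b))"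
      unfolding Pair j5_def by (cases "odd a") (auto intro!: wE simp: power2_eq_square algebra_simps)
    also have "\<dots> = q^13 * ((q^8) ^ nat (a^2) * (q^112) ^ nat (2*b^2+b))"
      using pw[of "a^2" "2*b^2+b" "13" q 8 112] tri_nonneg[of a] tri_nonneg[of b] by simp
    finally show ?thesis unfolding Pair by simp
  qed
qed

definition j0 :: "int \<times> int \<Rightarrow> int \<times> int" where
  "j0 = (\<lambda>(a,b). (a+7*b+2, a-b))"
definition i0 :: "int \<times> int \<Rightarrow> int \<times> int" where
  "i0 = (\<lambda>(x,y). (y + (x-y-2) div 8, (x-y-2) div 8))"
definition S0 :: "(int \<times> int) set" where "S0 = {(x,y). (x - y) mod 8 = 2}"

lemma T0:
  fixes q :: complex
  assumes "norm q < 1"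
  shows "(w q has_sum ((ram_psi (q^1) * ram_psi (q^7)))) S0"
proof (rule reidx[where i=i0 and j=j0])
  have P: "((\<lambda>(a,b). (q^1) ^ nat (2*a^2+a) * (q^7) ^ nat (2*b^2+b)) has_sum (ram_psi (q^1) * ram_psi (q^7))) UNIV"
    using assms npow[OF assms]
    by (intro prod_has_sum psi_has_sum phi_has_sum) auto
  from P show "((\<lambda>(a,b). ((q^1) ^ nat (2*a^2+a) * (q^7) ^ nat (2*b^2+b))) has_sum ((ram_psi (q^1) * ram_psi (q^7)))) UNIV"
    by simp
  show "i0 (j0 p) = p" for p
    by (cases p) (simp add: i0_def j0_def algebra_simps)
  show "j0 p \<in> S0" for p
    by (cases p) (auto simp: S0_def j0_def; presburger)
  show "j0 (i0 b) = b" if "b \<in> S0" for b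
    using that by (cases b) (auto simp: S0_def j0_def i0_def; presburger)
  show "w q (j0 p) = (\<lambda>(a,b). ((q^1) ^ nat (2*a^2+a) * (q^7) ^ nat (2*b^2+b))) p" for p
  proof (cases p)
    case (Pair a b)
    have "w q (j0 p) = q ^ nat (0 + 1 * (2*a^2+a) + 7 * (2*b^2+b))"
      unfolding Pair j0_def by (cases "True") (auto intro!: wE simp: power2_eq_square algebra_simps)
    also have "\<dots> = ((q^1) ^ nat (2*a^2+a) * (q^7) ^ nat (2*b^2+b))"
      using pw[of "2*a^2+a" "2*b^2+b" "0" q 1 7] tri_nonneg[of a] tri_nonneg[of b] by simp
    finally show ?thesis unfolding Pair by simp
  qed
qed

lemma cover: "S1 \<union> S2 \<union> S3 \<union> S4 \<union> S5 = S0"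
proof -
  have "(x - y) mod 8 = 2 \<Longrightarrow> y mod 4 = 0 \<or> y mod 4 = 2 \<or> y mod 4 = 1 \<or> (y mod 4 = 3 \<and> ((x+y) mod 16 = 0 \<or> (x+y) mod 16 = 8))" for x y :: int
    by presburger
  then show ?thesis by (auto simp: S0_def S1_def S2_def S3_def S4_def S5_def)
qed

theorem lemma5p1:
  fixes q :: complex
  assumes "norm q < 1"
  shows "ram_psi q * ram_psi (q ^ 7) =
           ram_psi (q ^ 8) * ram_phi (q ^ 28)
         + q ^ 6 * ram_phi (q ^ 4) * ram_psi (q ^ 56)
         + q * ram_psi (q ^ 16) * ram_phi (q ^ 56)
         + q ^ 3 * ram_psi (q ^ 4) * ram_psi (q ^ 28)
         + q ^ 13 * ram_phi (q ^ 8) * ram_psi (q ^ 112)"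
proof -
  have R: "(w q has_sum (ram_psi (q ^ 8) * ram_phi (q ^ 28)
         + q ^ 6 * (ram_phi (q ^ 4) * ram_psi (q ^ 56))
         + q * (ram_psi (q ^ 16) * ram_phi (q ^ 56))
         + q ^ 3 * (ram_psi (q ^ 4) * ram_psi (q ^ 28))
         + q ^ 13 * (ram_phi (q ^ 8) * ram_psi (q ^ 112)))) (S1 \<union> S2 \<union> S3 \<union> S4 \<union> S5)"
    by (intro has_sum_Un_disjoint T1 T2 T3 T4 T5 assms)
       (auto simp: S1_def S2_def S3_def S4_def S5_def)
  have L: "(w q has_sum (ram_psi (q^1) * ram_psi (q^7))) (S1 \<union> S2 \<union> S3 \<union> S4 \<union> S5)"
    unfolding cover by (rule T0[OF assms])
  from has_sum_unique[OF L R] show ?thesis by (simp add: mult.assoc)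
qed

end
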